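(* Let $c\in C^2(\mathbb R)$ and suppose there exist constants $\kappa>1$, $\lambda\ge 0$, $\bar\lambda\ge 0$ with $\frac1\kappa\le c(x)\le\kappa$, $|c'(x)|\le\lambda$ and $|c''(x)|\le\bar\lambda$ for all $x\in\mathbb R$. Let $(u_0,R_0,S_0,\mu_0,\nu_0)\in\mathcal D$ and let $(u(t),R(t),S(t),\mu(t),\nu(t))$ be the global conservative solution of the nonlinear variational wave equation $u_{tt}-c(u)(c(u)u_x)_x=0$ with this initial data. Then $u$ is globally H\"older continuous: there exists a constant $D$, depending only on $\kappa$ and $(\mu_0+\nu_0)(\mathbb R)$, such that \[ |u(t_1,x_1)-u(t_2,x_2)|\le D\sqrt{|t_2-t_1|+|x_2-x_1|}\quad\text{for all }(t_1,x_1),(t_2,x_2)\in\mathbb R^2. \]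
   Context: The set $\mathcal D$ of admissible (Eulerian) data consists of all tuples $(u,R,S,\mu,\nu)$ with $(u,R,S)\in[L^2(\mathbb R)]^3$, where $R$ and $S$ play the role of $u_t+c(u)u_x$ and $u_t-c(u)u_x$ (so $2c(u)u_x=R-S$), and $\mu,\nu$ are positive finite Radon measures whose absolutely continuous parts satisfy $d\mu_{ac}=\frac14R^2\,dx$, $d\nu_{ac}=\frac14S^2\,dx$. The global conservative solution is the (unique) weak solution constructed by the generalized method of characteristics (change to Lagrangian coordinates $(\xi,\eta)$ in which backward characteristics $y_t=-c(u(t,y))$ and forward characteristics $z_t=c(u(t,z))$ become vertical and horizontal lines); it satisfies in particular $(\mu+\nu)_t-(c(u)(\mu-\nu))_x=0$, $\big(\frac{\mu-\nu}{c(u)}\big)_t-(\mu+\nu)_x=0$ in the sense of distributions, and conservation of total energy $(\mu+\nu)(t,\mathbb R)=(\mu_0+\nu_0)(\mathbb R)$ for all $t$. *)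

theory Defs
  imports "HOL-Analysis.Analysis"
begin

definition L2 :: "(real \<Rightarrow> real) \<Rightarrow> bool" where
  "L2 f \<longleftrightarrow> f \<in> borel_measurable borel \<and> integrable lborel (\<lambda>x. (f x)^2)"

definition fin_borel_measure :: "real measure \<Rightarrow> bool" where
  "fin_borel_measure \<mu> \<longleftrightarrow> sets \<mu> = sets borel \<and> emeasure \<mu> UNIV < \<infinity>"

text \<open>The absolutely continuous part (Lebesgue decomposition w.r.t. Lebesgue measure)
  of mu has density g: mu = g dx + mu_s with mu_s concentrated on a Lebesgue null set N.\<close>
definition ac_part_density :: "real measure \<Rightarrow> (real \<Rightarrow> real) \<Rightarrow> bool" where
  "ac_part_density \<mu> g \<longleftrightarrow>
     (\<exists>N\<in>sets borel. emeasure lborel N = 0 \<and>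
        (\<forall>A\<in>sets borel. emeasure \<mu> (A - N) = (\<integral>\<^sup>+x\<in>A. ennreal (g x) \<partial>lborel)))"

text \<open>The admissible set D (depending on the wave speed c through 2 c(u) u_x = R - S).\<close>
definition admissible ::
  "(real \<Rightarrow> real) \<Rightarrow> (real \<Rightarrow> real) \<Rightarrow> (real \<Rightarrow> real) \<Rightarrow> (real \<Rightarrow> real)
    \<Rightarrow> real measure \<Rightarrow> real measure \<Rightarrow> bool" where
  "admissible c u R S \<mu> \<nu> \<longleftrightarrow>
     L2 u \<and> L2 R \<and> L2 S \<and>
     (\<forall>a b. a \<le> b \<longrightarrow>
        ((\<lambda>y. (R y - S y) / (2 * c (u y))) has_integral (u b - u a)) {a..b}) \<and>
     fin_borel_measure \<mu> \<and> fin_borel_measure \<nu> \<and>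
     ac_part_density \<mu> (\<lambda>x. (R x)^2 / 4) \<and> ac_part_density \<nu> (\<lambda>x. (S x)^2 / 4)"

definition test_fun ::
  "(real \<Rightarrow> real \<Rightarrow> real) \<Rightarrow> (real \<Rightarrow> real \<Rightarrow> real) \<Rightarrow> (real \<Rightarrow> real \<Rightarrow> real) \<Rightarrow> bool" where
  "test_fun \<phi> \<phi>t \<phi>x \<longleftrightarrow>
     continuous_on UNIV (\<lambda>(t, x). \<phi>t t x) \<and> continuous_on UNIV (\<lambda>(t, x). \<phi>x t x) \<and>
     (\<forall>t x. ((\<lambda>s. \<phi> s x) has_real_derivative \<phi>t t x) (at t) \<and>
            ((\<lambda>y. \<phi> t y) has_real_derivative \<phi>x t x) (at x)) \<and>
     (\<exists>K. \<forall>t x. K < \<bar>t\<bar> \<or> K < \<bar>x\<bar> \<longrightarrow> \<phi> t x = 0)"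

definition dint :: "(real \<Rightarrow> real \<Rightarrow> real) \<Rightarrow> real" where
  "dint f = (\<integral>t. (\<integral>x. f t x \<partial>lborel) \<partial>lborel)"

text \<open>Global conservative solution (for all t in R) of u_tt - c(u)(c(u)u_x)_x = 0 with
  initial data (u0,R0,S0,mu0,nu0), characterised by its weak formulation:
  the data stay in D, u_t = (R+S)/2 and the wave equation hold in distributions,
  the two balance laws for the energy measures hold in distributions, and the total
  energy is conserved.\<close>
definition conservative_solution ::
  "(real \<Rightarrow> real) \<Rightarrow> (real \<Rightarrow> real) \<Rightarrow>
   (real \<Rightarrow> real \<Rightarrow> real) \<Rightarrow> (real \<Rightarrow> real \<Rightarrow> real) \<Rightarrow> (real \<Rightarrow> real \<Rightarrow> real) \<Rightarrow>
   (real \<Rightarrow> real measure) \<Rightarrow> (real \<Rightarrow> real measure) \<Rightarrow>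
   (real \<Rightarrow> real) \<Rightarrow> (real \<Rightarrow> real) \<Rightarrow> (real \<Rightarrow> real) \<Rightarrow> real measure \<Rightarrow> real measure \<Rightarrow> bool" where
  "conservative_solution c c' u R S \<mu> \<nu> u0 R0 S0 \<mu>0 \<nu>0 \<longleftrightarrow>
     (\<forall>t. admissible c (u t) (R t) (S t) (\<mu> t) (\<nu> t)) \<and>
     u 0 = u0 \<and> R 0 = R0 \<and> S 0 = S0 \<and> \<mu> 0 = \<mu>0 \<and> \<nu> 0 = \<nu>0 \<and>
     continuous_on UNIV (\<lambda>(t, x). u t x) \<and>
     (\<lambda>(t, x). R t x) \<in> borel_measurable borel \<and>
     (\<lambda>(t, x). S t x) \<in> borel_measurable borel \<and>
     (\<forall>\<phi> \<phi>t \<phi>x. test_fun \<phi> \<phi>t \<phi>x \<longrightarrow>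
        dint (\<lambda>t x. u t x * \<phi>t t x + (R t x + S t x) / 2 * \<phi> t x) = 0 \<and>
        dint (\<lambda>t x. (R t x + S t x) / 2 * \<phi>t t x
                   - (R t x - S t x) / 2 *
                     (c' (u t x) * (R t x - S t x) / (2 * c (u t x)) * \<phi> t x
                      + c (u t x) * \<phi>x t x)) = 0 \<and>
        (\<integral>t. (\<integral>x. \<phi>t t x \<partial>\<mu> t) + (\<integral>x. \<phi>t t x \<partial>\<nu> t)
               - (\<integral>x. c (u t x) * \<phi>x t x \<partial>\<mu> t) + (\<integral>x. c (u t x) * \<phi>x t x \<partial>\<nu> t)
             \<partial>lborel) = 0 \<and>
        (\<integral>t. (\<integral>x. \<phi>t t x / c (u t x) \<partial>\<mu> t) - (\<integral>x. \<phi>t t x / c (u t x) \<partial>\<nu> t)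
               - (\<integral>x. \<phi>x t x \<partial>\<mu> t) - (\<integral>x. \<phi>x t x \<partial>\<nu> t)
             \<partial>lborel) = 0) \<and>
     (\<forall>t. measure (\<mu> t) UNIV + measure (\<nu> t) UNIV = measure \<mu>0 UNIV + measure \<nu>0 UNIV)"

end

theory Submission
  imports Defs
begin

definition qp :: "real \<Rightarrow> real" where "qp r = (max 0 r)^2"

lemma qp_deriv: "(qp has_real_derivative 2 * max 0 r) (at r)"
proof -
  have "((\<lambda>y. (qp y - qp r) / (y - r)) \<longlongrightarrow> 2 * max 0 r) (at r)"
  proof (cases "r = 0")
    case True
    have "((\<lambda>y. max 0 y) \<longlongrightarrow> max 0 0) (at (0::real))"
      by (intro tendsto_intros)
    moreover have "\<forall>\<^sub>F y in at (0::real). (qp y - qp 0) / (y - 0) = max 0 y"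
      unfolding eventually_at_filter by (auto simp: qp_def power2_eq_square max_def)
    ultimately show ?thesis using True by (simp add: tendsto_cong)
  next
    case False
    have "((\<lambda>y. max 0 y + max 0 r) \<longlongrightarrow> max 0 r + max 0 r) (at r)"
      by (intro tendsto_intros)
    moreover have "\<forall>\<^sub>F y in at r. (qp y - qp r) / (y - r) = max 0 y + max 0 r"
    proof -
      have "\<forall>\<^sub>F y in nhds r. y \<noteq> r \<longrightarrow> (qp y - qp r) / (y - r) = max 0 y + max 0 r"
      proof (cases "r > 0")
        case True
        have "\<forall>\<^sub>F y in nhds r. y > 0" using eventually_nhds_in_open[of "{0<..}" r] True by simp
        then show ?thesis
          by eventually_elim (use True in \<open>auto simp: qp_def power2_eq_square max_def field_simps\<close>)
      next
        case False
        with \<open>r \<noteq> 0\<close> have "r < 0" by simp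
        have "\<forall>\<^sub>F y in nhds r. y < 0" using eventually_nhds_in_open[of "{..<0}" r] \<open>r<0\<close> by simp
        then show ?thesis
          by eventually_elim (use \<open>r<0\<close> in \<open>auto simp: qp_def max_def\<close>)
      qed
      then show ?thesis unfolding eventually_at_filter by eventually_elim auto
    qed
    ultimately show ?thesis by (simp add: tendsto_cong)
  qed
  then show ?thesis by (simp add: has_field_derivative_iff)
qed

definition Rp :: "real \<Rightarrow> real" where "Rp r = (qp r - 2 * qp (r - 1) + qp (r - 2)) / 2"
definition Rpd :: "real \<Rightarrow> real" where "Rpd r = max 0 r - 2 * max 0 (r - 1) + max 0 (r - 2)"

lemma shift_deriv: "((\<lambda>r::real. r - k) has_real_derivative 1) (at r)"
  by (intro derivative_eq_intros) auto

lemma qp_shift: "((\<lambda>r. qp (r - k)) has_real_derivative 2 * max 0 (r - k)) (at r)"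
  using DERIV_chain2[OF qp_deriv shift_deriv, of k r] by simp

lemma Rp_deriv: "(Rp has_real_derivative Rpd r) (at r)"
proof -
  have "((\<lambda>r. (qp (r - 0) - 2 * qp (r - 1) + qp (r - 2)) / 2) has_real_derivative
     (2 * max 0 (r - 0) - 2 * (2 * max 0 (r - 1)) + 2 * max 0 (r - 2)) / 2) (at r)"
    by (intro DERIV_cdivide DERIV_add DERIV_diff DERIV_cmult qp_shift)
  then have "((\<lambda>r. (qp (r - 0) - 2 * qp (r - 1) + qp (r - 2)) / 2) has_real_derivative Rpd r) (at r)"
    by (rule DERIV_cong) (simp add: Rpd_def field_simps)
  then show ?thesis unfolding Rp_def[abs_def] by simp
qed

lemma Rpd_cont: "continuous_on UNIV Rpd"
  unfolding Rpd_def[abs_def] by (intro continuous_intros)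

lemma Rp_cont: "continuous_on UNIV Rp"
  unfolding Rp_def[abs_def] qp_def by (intro continuous_intros) auto

lemma Rp_0: "r \<le> 0 \<Longrightarrow> Rp r = 0"
  unfolding Rp_def qp_def by (simp add: max_def)

lemma Rp_1: "r \<ge> 2 \<Longrightarrow> Rp r = 1"
  unfolding Rp_def qp_def by (simp add: max_def power2_eq_square algebra_simps)

lemma Rp_bounds: "0 \<le> Rp r \<and> Rp r \<le> 1"
  unfolding Rp_def qp_def by (auto simp: max_def power2_eq_square algebra_simps; sos)

lemma Rp_half_ge: "r \<ge> 1 \<Longrightarrow> Rp r \<ge> 1/2"
  unfolding Rp_def qp_def by (auto simp: max_def power2_eq_square algebra_simps; sos)

lemma Rp_half_le: "r \<le> 1 \<Longrightarrow> Rp r \<le> 1/2"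
  unfolding Rp_def qp_def by (auto simp: max_def power2_eq_square algebra_simps; sos)

lemma Rpd_nonneg: "Rpd r \<ge> 0"
  unfolding Rpd_def by (auto simp: max_def)

lemma Rpd_zero: "r \<le> 0 \<or> r \<ge> 2 \<Longrightarrow> Rpd r = 0"
  unfolding Rpd_def by (auto simp: max_def)

definition Bz :: "real \<Rightarrow> real" where "Bz r = Rp r - Rp (r - 2)"

lemma Bz_bounds: "0 \<le> Bz r \<and> Bz r \<le> 1"
proof (cases "r \<le> 2")
  case True then show ?thesis using Rp_bounds[of r] Rp_0[of "r-2"] by (simp add: Bz_def)
next
  case False then show ?thesis using Rp_bounds[of "r-2"] Rp_1[of r] by (simp add: Bz_def)
qed

lemma Bz_half: "1 \<le> r \<Longrightarrow> r \<le> 3 \<Longrightarrow> Bz r \<ge> 1/2"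
proof (cases "r \<le> 2")
  case True then show "1 \<le> r \<Longrightarrow> r \<le> 3 \<Longrightarrow> Bz r \<ge> 1/2" using Rp_half_ge[of r] Rp_0[of "r-2"] by (simp add: Bz_def)
next
  case False then show "1 \<le> r \<Longrightarrow> r \<le> 3 \<Longrightarrow> Bz r \<ge> 1/2" using Rp_half_le[of "r-2"] Rp_1[of r] by (simp add: Bz_def)
qed

lemma Bz_zero: "r \<le> 0 \<or> r \<ge> 4 \<Longrightarrow> Bz r = 0"
  using Rp_0[of r] Rp_0[of "r-2"] Rp_1[of r] Rp_1[of "r-2"] by (auto simp: Bz_def)

lemma Bz_deriv: "(Bz has_real_derivative (Rpd r - Rpd (r - 2))) (at r)"
proof -
  have "((\<lambda>r. Rp r - Rp (r - 2)) has_real_derivative (Rpd r - Rpd (r - 2) * 1)) (at r)"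
    by (intro DERIV_diff DERIV_chain2[OF Rp_deriv] Rp_deriv shift_deriv)
  then show ?thesis unfolding Bz_def[abs_def] by simp
qed

lemma Bz_cont: "continuous_on UNIV Bz"
  unfolding Bz_def[abs_def] by (intro continuous_intros continuous_on_compose2[OF Rp_cont]) auto

lemma ac_bound:
  assumes fm: "fin_borel_measure \<mu>" and ac: "ac_part_density \<mu> (\<lambda>x. (R x)^2 / 4)" and L: "L2 R"
  shows "(\<integral>x. (R x)^2 \<partial>lborel) \<le> 4 * measure \<mu> UNIV"
proof -
  obtain N where N: "N \<in> sets borel" and eq: "\<And>A. A \<in> sets borel \<Longrightarrow>
      emeasure \<mu> (A - N) = (\<integral>\<^sup>+x\<in>A. ennreal ((R x)^2 / 4) \<partial>lborel)"
    using ac unfolding ac_part_density_def by blast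
  have int: "integrable lborel (\<lambda>x. (R x)^2)" using L unfolding L2_def by simp
  have int4: "integrable lborel (\<lambda>x. (R x)^2 / 4)" using int by simp
  have s: "sets \<mu> = sets borel" and fin: "emeasure \<mu> UNIV < \<infinity>" using fm unfolding fin_borel_measure_def by auto
  have "emeasure \<mu> (UNIV - N) = (\<integral>\<^sup>+x. ennreal ((R x)^2 / 4) \<partial>lborel)"
    using eq[of UNIV] by simp
  also have "\<dots> = ennreal (\<integral>x. (R x)^2 / 4 \<partial>lborel)"
    by (rule nn_integral_eq_integral[OF int4]) auto
  finally have e1: "emeasure \<mu> (UNIV - N) = ennreal (\<integral>x. (R x)^2 / 4 \<partial>lborel)" .
  have "emeasure \<mu> (UNIV - N) \<le> emeasure \<mu> UNIV"
    by (rule emeasure_mono) (auto simp: s)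
  also have "\<dots> = ennreal (measure \<mu> UNIV)"
    using fin by (simp add: emeasure_eq_ennreal_measure less_top[symmetric])
  finally have "(\<integral>x. (R x)^2 / 4 \<partial>lborel) \<le> measure \<mu> UNIV"
    using e1 measure_nonneg[of \<mu> UNIV] by (auto simp: ennreal_le_iff2)
  then show ?thesis by simp
qed

lemma amgm: assumes "(e::real) > 0" shows "2 * \<bar>d\<bar> \<le> e * d^2 + 1 / e"
proof -
  have "0 \<le> (e * \<bar>d\<bar> - 1)^2" by simp
  hence "2 * e * \<bar>d\<bar> \<le> e^2 * d^2 + 1" by (simp add: power2_eq_square algebra_simps)
  hence "(2 * \<bar>d\<bar>) * e \<le> (e * d^2 + 1 / e) * e" using assms by (simp add: power2_eq_square algebra_simps)
  thus ?thesis using assms by simp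
qed

lemma int_interval:
  fixes f :: "real \<Rightarrow> real"
  assumes "integrable lborel f" "\<And>x. f x \<ge> 0"
  shows "f integrable_on {a..b}" "integral {a..b} f \<le> (\<integral>x. f x \<partial>lborel)"
proof -
  have si: "set_integrable lborel {a..b} f"
    unfolding set_integrable_def using assms(1) by (intro integrable_mult_indicator) auto
  show "f integrable_on {a..b}" using set_borel_integral_eq_integral(1)[OF si] .
  have "integral {a..b} f = (LINT x : {a..b} | lborel. f x)" using set_borel_integral_eq_integral(2)[OF si] by simp
  also have "\<dots> \<le> (\<integral>x. f x \<partial>lborel)"
    unfolding set_lebesgue_integral_def
    using si assms unfolding set_integrable_def
    by (intro integral_mono) (auto split: split_indicator)
  finally show "integral {a..b} f \<le> (\<integral>x. f x \<partial>lborel)" .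
qed

lemma spatial:
  assumes adm: "admissible c u R S \<mu> \<nu>" and cpos: "\<forall>x. 1/\<kappa> \<le> c x" and kp: "\<kappa> > 0"
    and E: "measure \<mu> UNIV + measure \<nu> UNIV \<le> E" and ab: "a \<le> b"
  shows "\<bar>u b - u a\<bar> \<le> \<kappa>*(8*E+1)/4 * sqrt (b-a)"
proof (cases "a = b")
  case True then show ?thesis by simp
next
  case False
  with ab have L: "b - a > 0" by simp
  define e where "e = sqrt (b - a)"
  have ep: "e > 0" using L by (simp add: e_def)
  have fi: "((\<lambda>y. (R y - S y) / (2 * c (u y))) has_integral (u b - u a)) {a..b}"
    using adm ab unfolding admissible_def by blast
  have iR: "integrable lborel (\<lambda>x. (R x)^2)" and iS: "integrable lborel (\<lambda>x. (S x)^2)"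
    using adm unfolding admissible_def L2_def by auto
  have bR: "(\<integral>x. (R x)^2 \<partial>lborel) \<le> 4 * measure \<mu> UNIV"
    using adm ac_bound unfolding admissible_def by blast
  have bS: "(\<integral>x. (S x)^2 \<partial>lborel) \<le> 4 * measure \<nu> UNIV"
    using adm ac_bound unfolding admissible_def by blast
  define IR where "IR = integral {a..b} (\<lambda>x. (R x)^2)"
  define IS where "IS = integral {a..b} (\<lambda>x. (S x)^2)"
  have hR: "((\<lambda>x. (R x)^2) has_integral IR) {a..b}"
    unfolding IR_def using int_interval(1)[OF iR zero_le_power2] by (simp add: integrable_integral)
  have hS: "((\<lambda>x. (S x)^2) has_integral IS) {a..b}"
    unfolding IS_def using int_interval(1)[OF iS zero_le_power2] by (simp add: integrable_integral)
  have IRb: "IR \<le> 4 * measure \<mu> UNIV" unfolding IR_def by (rule order_trans[OF int_interval(2)[OF iR zero_le_power2] bR])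
  have ISb: "IS \<le> 4 * measure \<nu> UNIV" unfolding IS_def by (rule order_trans[OF int_interval(2)[OF iS zero_le_power2] bS])
  define g where "g y = \<kappa>/4 * (2*e*((R y)^2 + (S y)^2) + 1/e)" for y
  have hg: "(g has_integral (\<kappa>/4 * (2*e*(IR+IS) + (b-a)*(1/e)))) {a..b}"
  proof -
    have "((\<lambda>x. 1 / e) has_integral (b - a) * (1 / e)) {a..b}"
      using has_integral_const_real[of "1/e" a b] ab by simp
    then show ?thesis unfolding g_def by (intro has_integral_mult_right has_integral_add hR hS)
  qed
  have pt: "norm ((R y - S y) / (2 * c (u y))) \<le> g y" for y
  proof -
    define d where "d = R y - S y"
    have cp: "c (u y) \<ge> 1/\<kappa>" using cpos by simp
    have cpp: "c (u y) > 0" using cp kp by (smt (verit) divide_pos_pos)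
    have "1 / c (u y) \<le> \<kappa>" using cp cpp kp by (simp add: field_simps)
    have "norm (d / (2 * c (u y))) = \<bar>d\<bar> * (1 / c (u y)) / 2" using cpp by (simp add: abs_mult)
    also have "\<dots> \<le> \<bar>d\<bar> * \<kappa> / 2" using \<open>1 / c (u y) \<le> \<kappa>\<close>
      by (intro divide_right_mono mult_left_mono) auto
    also have "\<dots> = \<kappa>/4 * (2 * \<bar>d\<bar>)" by simp
    also have "\<dots> \<le> \<kappa>/4 * (e * d^2 + 1/e)" using amgm[OF ep, of d] kp by (intro mult_left_mono) auto
    also have "\<dots> \<le> g y"
    proof -
      have "0 \<le> (R y + S y)^2" by simp
      hence "d^2 \<le> 2*((R y)^2 + (S y)^2)" unfolding d_def power2_eq_square by (simp add: algebra_simps)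
      hence "e * d^2 \<le> e * (2*((R y)^2 + (S y)^2))" using ep by (intro mult_left_mono) auto
      thus ?thesis unfolding g_def using kp by (intro mult_left_mono) (auto simp: algebra_simps)
    qed
    finally show ?thesis by (simp add: d_def)
  qed
  have "\<bar>u b - u a\<bar> \<le> \<kappa>/4 * (2*e*(IR+IS) + (b-a)*(1/e))"
    using integral_norm_bound_integral[OF has_integral_integrable[OF fi] has_integral_integrable[OF hg] pt]
    using integral_unique[OF fi] integral_unique[OF hg] by simp
  also have "\<dots> \<le> \<kappa>/4 * (2*e*(4*E) + (b-a)*(1/e))"
    using IRb ISb E kp ep by (intro mult_left_mono add_right_mono) auto
  also have "\<dots> = \<kappa>*(8*E+1)/4 * sqrt (b-a)"
  proof -
    have sq: "e * e = b - a" using L unfolding e_def by simp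
    have "(b-a)*(1/e) = e" using ep by (simp add: sq[symmetric])
    then show ?thesis unfolding e_def[symmetric] by (simp add: algebra_simps)
  qed
  finally show ?thesis .
qed

lemma cont_cs_integrable:
  fixes f :: "real \<Rightarrow> real"
  assumes "continuous_on UNIV f" "\<And>s. s \<notin> {p..q} \<Longrightarrow> f s = 0"
  shows "integrable lborel f"
proof -
  have "integrable lborel (\<lambda>x. indicator {p..q} x *\<^sub>R f x)"
    by (rule borel_integrable_compact) (auto intro: continuous_on_subset[OF assms(1)])
  moreover have "(\<lambda>x. indicator {p..q} x *\<^sub>R f x) = f"
    using assms(2) by (intro ext) (auto simp: indicator_def; force)
  ultimately show ?thesis by simp
qed

lemma Rp_sc_deriv: assumes "\<delta> > 0"
  shows "((\<lambda>s. Rp ((s - c) / \<delta>)) has_real_derivative Rpd ((s - c) / \<delta>) / \<delta>) (at s)"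
proof -
  have "((\<lambda>s. (s - c) / \<delta>) has_real_derivative 1 / \<delta>) (at s)"
    using assms by (intro derivative_eq_intros) auto
  from DERIV_chain2[OF Rp_deriv this] show ?thesis by simp
qed

lemma Rpd_sc_cont: assumes "\<delta> > 0" shows "continuous_on UNIV (\<lambda>s. Rpd ((s - c) / \<delta>) / \<delta>)"
  using assms by (intro continuous_intros continuous_on_compose2[OF Rpd_cont]) auto

lemma Rpd_sc_zero: assumes "\<delta> > 0" "s \<notin> {c..c+2*\<delta>}" shows "Rpd ((s - c) / \<delta>) / \<delta> = 0"
proof -
  have "(s - c) / \<delta> \<le> 0 \<or> (s - c) / \<delta> \<ge> 2" using assms by (auto simp: field_simps)
  then show ?thesis using Rpd_zero by simp
qed

lemma Rpd_sc_int: assumes "\<delta> > 0"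
  shows "integrable lborel (\<lambda>s. Rpd ((s - c) / \<delta>) / \<delta>)"
    "(\<integral>s. Rpd ((s - c) / \<delta>) / \<delta> \<partial>lborel) = 1"
proof -
  show "integrable lborel (\<lambda>s. Rpd ((s - c) / \<delta>) / \<delta>)"
    by (rule cont_cs_integrable[OF Rpd_sc_cont[OF assms] Rpd_sc_zero[OF assms]])
  have "integral\<^sup>L lborel (\<lambda>x. indicator {c .. c+2*\<delta>} x *\<^sub>R (Rpd ((x - c) / \<delta>) / \<delta>))
       = Rp ((c + 2*\<delta> - c)/\<delta>) - Rp ((c - c) / \<delta>)" (is "?I = _")
    using assms
    by (intro integral_FTC_atLeastAtMost continuous_on_subset[OF Rpd_sc_cont[OF assms]])
       (auto intro!: has_field_derivative_at_within Rp_sc_deriv simp: has_real_derivative_iff_has_vector_derivative[symmetric])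
  also have "\<dots> = 1" using assms by (simp add: Rp_0 Rp_1)
  finally have A: "?I = 1" .
  have B: "(\<lambda>x. indicator {c .. c+2*\<delta>} x *\<^sub>R (Rpd ((x - c) / \<delta>) / \<delta>)) = (\<lambda>s. Rpd ((s - c) / \<delta>) / \<delta>)"
    using Rpd_sc_zero[OF assms, of _ c] by (intro ext) (auto simp: indicator_def; force)
  show "(\<integral>s. Rpd ((s - c) / \<delta>) / \<delta> \<partial>lborel) = 1"
    using A unfolding B .
qed

lemma bump_approx:
  fixes V :: "real \<Rightarrow> real"
  assumes dp: "\<delta> > 0" and cV: "continuous_on UNIV V" and cl: "\<And>s. s \<in> {c..c+2*\<delta>} \<Longrightarrow> \<bar>V s - V p\<bar> \<le> \<epsilon>"
  shows "\<bar>(\<integral>s. Rpd ((s - c) / \<delta>) / \<delta> * V s \<partial>lborel) - V p\<bar> \<le> \<epsilon>"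
proof -
  define g where "g s = Rpd ((s - c) / \<delta>) / \<delta>" for s
  have gi: "integrable lborel g" and g1: "(\<integral>s. g s \<partial>lborel) = 1" using Rpd_sc_int[OF dp] unfolding g_def by auto
  have gz: "s \<notin> {c..c+2*\<delta>} \<Longrightarrow> g s = 0" for s using Rpd_sc_zero[OF dp] unfolding g_def by auto
  have gn: "g s \<ge> 0" for s unfolding g_def using Rpd_nonneg dp by simp
  have gc: "continuous_on UNIV g" unfolding g_def[abs_def] by (rule Rpd_sc_cont[OF dp])
  have gVi: "integrable lborel (\<lambda>s. g s * V s)"
    by (rule cont_cs_integrable[of _ c "c+2*\<delta>"]) (auto intro!: continuous_intros gc cV simp: gz)
  have "(\<integral>s. g s * V s \<partial>lborel) - V p = (\<integral>s. g s * V s \<partial>lborel) - (\<integral>s. g s * V p \<partial>lborel)"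
    using g1 gi by simp
  also have "\<dots> = (\<integral>s. g s * (V s - V p) \<partial>lborel)"
    using gi gVi by (simp add: algebra_simps)
  finally have eq: "(\<integral>s. g s * V s \<partial>lborel) - V p = (\<integral>s. g s * (V s - V p) \<partial>lborel)" .
  have "\<bar>\<integral>s. g s * (V s - V p) \<partial>lborel\<bar> \<le> (\<integral>s. g s * \<epsilon> \<partial>lborel)"
  proof (rule integral_abs_bound_integral)
    show "integrable lborel (\<lambda>s. g s * (V s - V p))" using gi gVi by (simp add: algebra_simps)
    show "integrable lborel (\<lambda>s. g s * \<epsilon>)" using gi by simp
    fix s
    show "\<bar>g s * (V s - V p)\<bar> \<le> g s * \<epsilon>"
    proof (cases "s \<in> {c..c+2*\<delta>}")
      case True then show ?thesis using cl[OF True] gn[of s] by (simp add: abs_mult mult_left_mono)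
    next
      case False then show ?thesis using gz[OF False] by simp
    qed
  qed
  also have "\<dots> = \<epsilon>" using g1 gi by simp
  finally show ?thesis using eq unfolding g_def by simp
qed

lemma weak_lip:
  fixes U W :: "real \<Rightarrow> real"
  assumes cU: "continuous_on UNIV U" and Wm: "W \<in> borel_measurable borel" and bnd: "\<And>t. \<bar>W t\<bar> \<le> M"
    and weak: "\<forall>\<alpha> \<alpha>'. (\<forall>s. (\<alpha> has_real_derivative \<alpha>' s) (at s)) \<and> continuous_on UNIV \<alpha>' \<and>
        (\<exists>K. \<forall>s. K < \<bar>s\<bar> \<longrightarrow> \<alpha> s = 0) \<longrightarrow> (\<integral>s. \<alpha>' s * U s + \<alpha> s * W s \<partial>lborel) = 0"
    and ab: "a \<le> b"
  shows "\<bar>U b - U a\<bar> \<le> M * (b - a)"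
proof (rule field_le_epsilon)
  fix \<eta> :: real assume ep: "\<eta> > 0"
  have M0: "M \<ge> 0" using bnd[of 0] by linarith
  define \<epsilon> where "\<epsilon> = \<eta> / 4"
  have epp: "\<epsilon> > 0" using ep by (simp add: \<epsilon>_def)
  obtain d1 where d1: "d1 > 0" "\<And>s. dist s a < d1 \<Longrightarrow> dist (U s) (U a) < \<epsilon>"
    using cU epp unfolding continuous_on_iff by (metis UNIV_I)
  obtain d2 where d2: "d2 > 0" "\<And>s. dist s b < d2 \<Longrightarrow> dist (U s) (U b) < \<epsilon>"
    using cU epp unfolding continuous_on_iff by (metis UNIV_I)
  define \<delta> where "\<delta> = min (min d1 d2) (\<eta> / (8 * (M + 1))) / 4"
  have dp: "\<delta> > 0" using d1 d2 ep M0 by (simp add: \<delta>_def)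
  have dd1: "2 * \<delta> < d1" and dd2: "2 * \<delta> < d2" using d1 d2 dp by (auto simp: \<delta>_def)
  have dM: "4 * M * \<delta> \<le> \<eta> / 8"
  proof -
    have "\<delta> \<le> \<eta> / (8 * (M + 1)) / 4" unfolding \<delta>_def by (intro divide_right_mono) auto
    hence "4 * \<delta> \<le> \<eta> / (8 * (M + 1))" using M0 by (simp add: field_simps)
    hence "M * (4 * \<delta>) \<le> M * (\<eta> / (8 * (M + 1)))" using M0 by (rule mult_left_mono)
    hence "4 * M * \<delta> \<le> M * (\<eta> / (8 * (M + 1)))" by (simp add: algebra_simps)
    also have "\<dots> \<le> \<eta> / 8" using M0 ep by (simp add: field_simps)
    finally show ?thesis .
  qed
  define c1 where "c1 = a - 2 * \<delta>"
  define g1 where "g1 s = Rpd ((s - c1) / \<delta>) / \<delta>" for s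
  define g2 where "g2 s = Rpd ((s - b) / \<delta>) / \<delta>" for s
  define \<alpha> where "\<alpha> s = Rp ((s - c1) / \<delta>) - Rp ((s - b) / \<delta>)" for s
  have ad: "(\<alpha> has_real_derivative (g1 s - g2 s)) (at s)" for s
    unfolding \<alpha>_def[abs_def] g1_def g2_def by (intro DERIV_diff Rp_sc_deriv dp)
  have gc: "continuous_on UNIV (\<lambda>s. g1 s - g2 s)"
    unfolding g1_def g2_def by (intro continuous_on_diff Rpd_sc_cont dp)
  have az: "\<alpha> s = 0" if "s \<notin> {c1..b + 2*\<delta>}" for s
  proof (cases "s < c1")
    case True
    have "(s - c1) / \<delta> \<le> 0" "(s - b) / \<delta> \<le> 0" using True dp ab by (auto simp: c1_def divide_le_0_iff)
    then show ?thesis by (simp add: \<alpha>_def Rp_0)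
  next
    case False
    with that have s: "s > b + 2 * \<delta>" by auto
    have "(s - c1) / \<delta> \<ge> 2" "(s - b) / \<delta> \<ge> 2" using s dp ab by (auto simp: c1_def le_divide_eq)
    then show ?thesis by (simp add: \<alpha>_def Rp_1)
  qed
  have aK: "\<exists>K. \<forall>s. K < \<bar>s\<bar> \<longrightarrow> \<alpha> s = 0"
    by (rule exI[of _ "\<bar>c1\<bar> + \<bar>b + 2*\<delta>\<bar>"]) (auto intro!: az)
  have a1: "\<bar>\<alpha> s\<bar> \<le> 1" for s using Rp_bounds[of "(s - c1) / \<delta>"] Rp_bounds[of "(s - b) / \<delta>"]
    unfolding \<alpha>_def by linarith
  have eq0: "(\<integral>s. (g1 s - g2 s) * U s + \<alpha> s * W s \<partial>lborel) = 0"
    using weak[rule_format, of \<alpha> "\<lambda>s. g1 s - g2 s"] ad gc aK by blast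
  have g1c: "continuous_on UNIV g1" unfolding g1_def[abs_def] by (rule Rpd_sc_cont[OF dp])
  have g2c: "continuous_on UNIV g2" unfolding g2_def[abs_def] by (rule Rpd_sc_cont[OF dp])
  have i1: "integrable lborel (\<lambda>s. g1 s * U s)"
    by (rule cont_cs_integrable[of _ c1 "c1+2*\<delta>"])
       (rule continuous_on_mult[OF g1c cU], simp add: g1_def Rpd_sc_zero[OF dp])
  have i2: "integrable lborel (\<lambda>s. g2 s * U s)"
    by (rule cont_cs_integrable[of _ b "b+2*\<delta>"])
       (rule continuous_on_mult[OF g2c cU], simp add: g2_def Rpd_sc_zero[OF dp])
  have ac: "continuous_on UNIV \<alpha>"
    unfolding \<alpha>_def[abs_def] using dp by (intro continuous_intros continuous_on_compose2[OF Rp_cont]) auto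
  have bd: "norm (\<alpha> s * W s) \<le> M * indicator {c1..b+2*\<delta>} s" for s
  proof (cases "s \<in> {c1..b+2*\<delta>}")
    case True then show ?thesis using a1[of s] bnd[of s] M0
      by (simp add: abs_mult) (metis abs_ge_zero mult_le_one mult.commute mult_mono' mult_1_right)
  next
    case False then show ?thesis using az by simp
  qed
  have iM: "integrable lborel (\<lambda>s. M * indicator {c1..b+2*\<delta>} s)"
    by (intro integrable_mult_right integrable_real_indicator) (auto simp: emeasure_lborel_Icc_eq)
  have i3: "integrable lborel (\<lambda>s. \<alpha> s * W s)"
  proof (rule Bochner_Integration.integrable_bound[OF iM])
    show "(\<lambda>s. \<alpha> s * W s) \<in> borel_measurable lborel"
      using borel_measurable_continuous_onI[OF ac] Wm by simp
    show "AE s in lborel. norm (\<alpha> s * W s) \<le> norm (M * indicator {c1..b+2*\<delta>} s)"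
      using bd M0 by (auto simp: abs_mult)
  qed
  define I1 where "I1 = (\<integral>s. g1 s * U s \<partial>lborel)"
  define I2 where "I2 = (\<integral>s. g2 s * U s \<partial>lborel)"
  define I3 where "I3 = (\<integral>s. \<alpha> s * W s \<partial>lborel)"
  have "(\<integral>s. (g1 s - g2 s) * U s + \<alpha> s * W s \<partial>lborel) = (\<integral>s. (g1 s * U s - g2 s * U s) + \<alpha> s * W s \<partial>lborel)"
    by (simp add: algebra_simps)
  also have "\<dots> = I1 - I2 + I3" unfolding I1_def I2_def I3_def using i1 i2 i3 by simp
  finally have I0: "I1 - I2 + I3 = 0" using eq0 by simp
  have "\<bar>I3\<bar> \<le> (\<integral>s. M * indicator {c1..b+2*\<delta>} s \<partial>lborel)"
    unfolding I3_def by (rule integral_abs_bound_integral[OF i3 iM]) (use bd in auto)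
  also have "\<dots> = M * (b + 2*\<delta> - c1)" using dp ab by (simp add: c1_def)
  finally have I3b: "\<bar>I3\<bar> \<le> M * (b - a) + 4 * M * \<delta>" by (simp add: c1_def algebra_simps)
  have I1b: "\<bar>I1 - U a\<bar> \<le> \<epsilon>"
    unfolding I1_def g1_def
  proof (rule bump_approx[OF dp cU])
    fix s assume "s \<in> {c1..c1+2*\<delta>}"
    then have "dist s a < d1" using dd1 dp by (auto simp: c1_def dist_real_def)
    then show "\<bar>U s - U a\<bar> \<le> \<epsilon>" using d1(2) by (simp add: dist_real_def less_imp_le)
  qed
  have I2b: "\<bar>I2 - U b\<bar> \<le> \<epsilon>"
    unfolding I2_def g2_def
  proof (rule bump_approx[OF dp cU])
    fix s assume "s \<in> {b..b+2*\<delta>}"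
    then have "dist s b < d2" using dd2 dp by (auto simp: dist_real_def)
    then show "\<bar>U s - U b\<bar> \<le> \<epsilon>" using d2(2) by (simp add: dist_real_def less_imp_le)
  qed
  show "\<bar>U b - U a\<bar> \<le> M * (b - a) + \<eta>"
    using I0 I1b I2b I3b dM unfolding \<epsilon>_def by linarith
qed

definition bet :: "real \<Rightarrow> real \<Rightarrow> real \<Rightarrow> real" where
  "bet x0 h y = Bz ((y - x0) / h + 2)"
definition betd :: "real \<Rightarrow> real \<Rightarrow> real \<Rightarrow> real" where
  "betd x0 h y = (Rpd ((y - x0) / h + 2) - Rpd ((y - x0) / h + 2 - 2)) / h"

lemma bet_bounds: "0 \<le> bet x0 h y \<and> bet x0 h y \<le> 1"
  unfolding bet_def using Bz_bounds by simp

lemma bet_zero: assumes "h > 0" "y \<notin> {x0-2*h..x0+2*h}" shows "bet x0 h y = 0"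
proof -
  have "(y - x0) / h + 2 \<le> 0 \<or> (y - x0) / h + 2 \<ge> 4" using assms
    by (auto simp: field_simps)
  then show ?thesis unfolding bet_def using Bz_zero by simp
qed

lemma bet_half: assumes "h > 0" "y \<in> {x0-h..x0+h}" shows "bet x0 h y \<ge> 1/2"
proof -
  have "1 \<le> (y - x0) / h + 2" "(y - x0) / h + 2 \<le> 3" using assms by (auto simp: field_simps)
  then show ?thesis unfolding bet_def using Bz_half by simp
qed

lemma bet_cont: assumes "h > 0" shows "continuous_on UNIV (bet x0 h)"
  unfolding bet_def[abs_def] using assms
  by (intro continuous_on_compose2[OF Bz_cont] continuous_intros) auto

lemma betd_cont: assumes "h > 0" shows "continuous_on UNIV (betd x0 h)"
  unfolding betd_def[abs_def] using assms
  by (intro continuous_intros continuous_on_compose2[OF Rpd_cont]) auto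

lemma bet_deriv: assumes "h > 0" shows "(bet x0 h has_real_derivative betd x0 h y) (at y)"
proof -
  have "((\<lambda>y. (y - x0) / h + 2) has_real_derivative 1 / h) (at y)"
    using assms by (intro derivative_eq_intros) auto
  from DERIV_chain2[OF Bz_deriv this] show ?thesis
    unfolding bet_def[abs_def] betd_def by (simp add: field_simps)
qed

lemma bet_int: assumes "h > 0"
  shows "integrable lborel (bet x0 h)" "integrable lborel (\<lambda>y. (bet x0 h y)^2)"
    "(\<integral>y. bet x0 h y \<partial>lborel) \<ge> h" "(\<integral>y. (bet x0 h y)^2 \<partial>lborel) \<le> 4 * h"
proof -
  show i1: "integrable lborel (bet x0 h)"
    by (rule cont_cs_integrable[OF bet_cont[OF assms] bet_zero[OF assms]])
  show i2: "integrable lborel (\<lambda>y. (bet x0 h y)^2)"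
    by (rule cont_cs_integrable[of _ "x0-2*h" "x0+2*h"])
       (auto intro!: continuous_intros bet_cont[OF assms] simp: bet_zero[OF assms])
  have ii: "integrable lborel (\<lambda>y. 1/2 * indicator {x0-h..x0+h} y :: real)"
    by (intro integrable_mult_right integrable_real_indicator) (auto simp: emeasure_lborel_Icc_eq)
  have "(\<integral>y. (1/2 * indicator {x0-h..x0+h} y :: real) \<partial>lborel) \<le> (\<integral>y. bet x0 h y \<partial>lborel)"
  proof (rule integral_mono[OF ii i1])
    fix y show "1/2 * indicator {x0-h..x0+h} y \<le> bet x0 h y"
      using bet_half[OF assms, of y x0] bet_bounds[of x0 h y] by (auto simp: indicator_def)
  qed
  then show "(\<integral>y. bet x0 h y \<partial>lborel) \<ge> h" using assms by simp
  have ij: "integrable lborel (\<lambda>y. indicator {x0-2*h..x0+2*h} y :: real)"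
    by (intro integrable_real_indicator) (auto simp: emeasure_lborel_Icc_eq)
  have "(\<integral>y. (bet x0 h y)^2 \<partial>lborel) \<le> (\<integral>y. indicator {x0-2*h..x0+2*h} y \<partial>lborel)"
  proof (rule integral_mono[OF i2 ij])
    fix y show "(bet x0 h y)^2 \<le> indicator {x0-2*h..x0+2*h} y"
    proof (cases "y \<in> {x0-2*h..x0+2*h}")
      case True then show ?thesis using bet_bounds[of x0 h y] by (simp add: power_le_one)
    next
      case False then show ?thesis using bet_zero[OF assms False] by simp
    qed
  qed
  then show "(\<integral>y. (bet x0 h y)^2 \<partial>lborel) \<le> 4 * h" using assms by simp
qed

lemma L2_prod_bound:
  fixes f g :: "real \<Rightarrow> real"
  assumes fm: "f \<in> borel_measurable borel" and gm: "g \<in> borel_measurable borel"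
    and fi: "integrable lborel (\<lambda>y. (f y)^2)" and gi: "integrable lborel (\<lambda>y. (g y)^2)" and e: "e > 0"
  shows "integrable lborel (\<lambda>y. f y * g y)"
    "\<bar>\<integral>y. f y * g y \<partial>lborel\<bar> \<le> (e * (\<integral>y. (f y)^2 \<partial>lborel) + (\<integral>y. (g y)^2 \<partial>lborel) / e) / 2"
proof -
  have pt: "\<bar>f y * g y\<bar> \<le> (e * (f y)^2 + (g y)^2 / e) / 2" for y
  proof -
    have "0 \<le> (e * \<bar>f y\<bar> - \<bar>g y\<bar>)^2" by simp
    hence "2 * e * \<bar>f y * g y\<bar> \<le> e^2 * (f y)^2 + (g y)^2"
      by (simp add: power2_eq_square algebra_simps abs_mult)
    hence "(2 * \<bar>f y * g y\<bar>) * e \<le> (e * (f y)^2 + (g y)^2 / e) * e"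
      using e by (simp add: power2_eq_square algebra_simps)
    hence "2 * \<bar>f y * g y\<bar> \<le> e * (f y)^2 + (g y)^2 / e" using e by simp
    thus ?thesis by simp
  qed
  have bi: "integrable lborel (\<lambda>y. (e * (f y)^2 + (g y)^2 / e) / 2)" using fi gi by simp
  show i: "integrable lborel (\<lambda>y. f y * g y)"
  proof (rule Bochner_Integration.integrable_bound[OF bi])
    show "(\<lambda>y. f y * g y) \<in> borel_measurable lborel" using fm gm by simp
    show "AE x in lborel. norm (f x * g x) \<le> norm ((e * (f x)^2 + (g x)^2 / e) / 2)"
      using pt order_trans[OF pt abs_ge_self] by (auto simp del: abs_mult)
  qed
  have "\<bar>\<integral>y. f y * g y \<partial>lborel\<bar> \<le> (\<integral>y. (e * (f y)^2 + (g y)^2 / e) / 2 \<partial>lborel)"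
    by (rule integral_abs_bound_integral[OF i bi pt])
  also have "\<dots> = (e * (\<integral>y. (f y)^2 \<partial>lborel) + (\<integral>y. (g y)^2 \<partial>lborel) / e) / 2"
    using fi gi by simp
  finally show "\<bar>\<integral>y. f y * g y \<partial>lborel\<bar> \<le> (e * (\<integral>y. (f y)^2 \<partial>lborel) + (\<integral>y. (g y)^2 \<partial>lborel) / e) / 2" .
qed

lemma temporal:
  fixes u R S :: "real \<Rightarrow> real \<Rightarrow> real"
  assumes adm: "\<And>t. admissible c (u t) (R t) (S t) (\<mu> t) (\<nu> t)"
    and en: "\<And>t. measure (\<mu> t) UNIV + measure (\<nu> t) UNIV = E"
    and cu: "continuous_on UNIV (\<lambda>(t, x). u t x)"
    and Rm: "(\<lambda>(t, x). R t x) \<in> borel_measurable borel"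
    and Sm: "(\<lambda>(t, x). S t x) \<in> borel_measurable borel"
    and weak: "\<And>\<phi> \<phi>t \<phi>x. test_fun \<phi> \<phi>t \<phi>x \<Longrightarrow>
        dint (\<lambda>t x. u t x * \<phi>t t x + (R t x + S t x) / 2 * \<phi> t x) = 0"
    and sp: "\<And>t y z. \<bar>u t y - u t z\<bar> \<le> K1 * sqrt \<bar>y - z\<bar>"
    and K1: "K1 \<ge> 0" and E0: "E \<ge> 0" and ab: "a < b"
  shows "\<bar>u b x0 - u a x0\<bar> \<le> (3*K1 + E + 2) * sqrt (b - a)"
proof -
  define h where "h = b - a"
  have hp: "h > 0" using ab by (simp add: h_def)
  define \<beta> where "\<beta> = bet x0 h"
  define U where "U t = (\<integral>y. u t y * \<beta> y \<partial>lborel)" for t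
  define w where "w t y = (R t y + S t y) / 2" for t y
  define W where "W t = (\<integral>y. w t y * \<beta> y \<partial>lborel)" for t
  define Bi where "Bi = (\<integral>y. \<beta> y \<partial>lborel)"
  have Bi: "Bi \<ge> h" unfolding Bi_def \<beta>_def using bet_int(3)[OF hp] .
  have \<beta>c: "continuous_on UNIV \<beta>" unfolding \<beta>_def by (rule bet_cont[OF hp])
  have \<beta>z: "\<And>y. y \<notin> {x0-2*h..x0+2*h} \<Longrightarrow> \<beta> y = 0" unfolding \<beta>_def by (rule bet_zero[OF hp])
  have \<beta>b: "\<And>y. 0 \<le> \<beta> y \<and> \<beta> y \<le> 1" unfolding \<beta>_def by (rule bet_bounds)
  have \<beta>i: "integrable lborel \<beta>" unfolding \<beta>_def by (rule bet_int(1)[OF hp])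
  have \<beta>2i: "integrable lborel (\<lambda>y. (\<beta> y)^2)" unfolding \<beta>_def by (rule bet_int(2)[OF hp])
  have \<beta>2b: "(\<integral>y. (\<beta> y)^2 \<partial>lborel) \<le> 4 * h" unfolding \<beta>_def by (rule bet_int(4)[OF hp])
  have \<beta>m: "\<beta> \<in> borel_measurable borel" by (rule borel_measurable_continuous_onI[OF \<beta>c])
  have ut: "continuous_on UNIV (u t)" for t
  proof -
    have "continuous_on UNIV (\<lambda>y. (\<lambda>(t, x). u t x) (t, y))"
      by (rule continuous_on_compose2[OF cu]) (auto intro: continuous_intros)
    then show ?thesis by simp
  qed
  have iu: "integrable lborel (\<lambda>y. u t y * \<beta> y)" for t
    by (rule cont_cs_integrable[of _ "x0-2*h" "x0+2*h"]) (auto intro!: continuous_on_mult ut \<beta>c simp: \<beta>z)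
  have Rt: "R t \<in> borel_measurable borel" "integrable lborel (\<lambda>y. (R t y)^2)"
    and St: "S t \<in> borel_measurable borel" "integrable lborel (\<lambda>y. (S t y)^2)" for t
    using adm[of t] unfolding admissible_def L2_def by auto
  have bR: "(\<integral>y. (R t y)^2 \<partial>lborel) \<le> 4 * measure (\<mu> t) UNIV" for t
    using adm[of t] ac_bound unfolding admissible_def by blast
  have bS: "(\<integral>y. (S t y)^2 \<partial>lborel) \<le> 4 * measure (\<nu> t) UNIV" for t
    using adm[of t] ac_bound unfolding admissible_def by blast
  have wm: "w t \<in> borel_measurable borel" for t
    unfolding w_def using Rt(1)[of t] St(1)[of t] by measurable
  have wpt: "(w t y)^2 \<le> ((R t y)^2 + (S t y)^2) / 2" for t y
  proof -
    have "0 \<le> (R t y - S t y)^2" by simp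
    then show ?thesis unfolding w_def power2_eq_square by (simp add: algebra_simps)
  qed
  have RSi: "integrable lborel (\<lambda>y. ((R t y)^2 + (S t y)^2) / 2)" for t using Rt St by simp
  have w2i: "integrable lborel (\<lambda>y. (w t y)^2)" for t
  proof (rule Bochner_Integration.integrable_bound[OF RSi[of t]])
    show "(\<lambda>y. (w t y)^2) \<in> borel_measurable lborel" using wm[of t] by simp
    show "AE x in lborel. norm ((w t x)^2) \<le> norm (((R t x)^2 + (S t x)^2) / 2)"
      using wpt by simp
  qed
  have w2b: "(\<integral>y. (w t y)^2 \<partial>lborel) \<le> 2 * E" for t
  proof -
    have "(\<integral>y. (w t y)^2 \<partial>lborel) \<le> (\<integral>y. ((R t y)^2 + (S t y)^2) / 2 \<partial>lborel)"
      by (rule integral_mono[OF w2i RSi wpt])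
    also have "\<dots> = ((\<integral>y. (R t y)^2 \<partial>lborel) + (\<integral>y. (S t y)^2 \<partial>lborel)) / 2" using Rt St by simp
    also have "\<dots> \<le> 2 * E" using bR[of t] bS[of t] en[of t] by simp
    finally show ?thesis .
  qed
  have sh: "sqrt h > 0" using hp by simp
  have iw: "integrable lborel (\<lambda>y. w t y * \<beta> y)" for t
    by (rule L2_prod_bound(1)[OF wm \<beta>m w2i \<beta>2i sh])
  define M where "M = sqrt h * (E + 2)"
  have M0: "M \<ge> 0" using E0 hp by (simp add: M_def)
  have Wb: "\<bar>W t\<bar> \<le> M" for t
  proof -
    have "\<bar>W t\<bar> \<le> (sqrt h * (\<integral>y. (w t y)^2 \<partial>lborel) + (\<integral>y. (\<beta> y)^2 \<partial>lborel) / sqrt h) / 2"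
      unfolding W_def by (rule L2_prod_bound(2)[OF wm \<beta>m w2i \<beta>2i sh])
    also have "\<dots> \<le> (sqrt h * (2 * E) + (4 * h) / sqrt h) / 2"
      using w2b[of t] \<beta>2b sh by (intro divide_right_mono add_mono mult_left_mono) auto
    also have "\<dots> = M"
    proof -
      have "h / sqrt h = sqrt h" using hp by (metis real_div_sqrt less_imp_le)
      then have "(4 * h) / sqrt h = 4 * sqrt h" by simp
      then show ?thesis unfolding M_def by (simp add: algebra_simps)
    qed
    finally show ?thesis .
  qed
  have Uc: "continuous_on UNIV U"
    unfolding continuous_on_iff
  proof (intro ballI allI impI)
    fix t0 :: real and \<epsilon> :: real assume "t0 \<in> UNIV" "\<epsilon> > 0"
    define Kc where "Kc = {t0-1..t0+1} \<times> {x0-2*h..x0+2*h}"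
    have "uniformly_continuous_on Kc (\<lambda>(t, x). u t x)"
      unfolding Kc_def
      by (intro compact_uniformly_continuous continuous_on_subset[OF cu] compact_Times compact_Icc) auto
    moreover have e'p: "\<epsilon> / (Bi + 1) > 0" using \<open>\<epsilon> > 0\<close> Bi hp by simp
    ultimately obtain d' where d': "d' > 0"
      "\<And>p q. p \<in> Kc \<Longrightarrow> q \<in> Kc \<Longrightarrow> dist q p < d' \<Longrightarrow> dist ((\<lambda>(t, x). u t x) q) ((\<lambda>(t, x). u t x) p) < \<epsilon> / (Bi + 1)"
      unfolding uniformly_continuous_on_def by metis
    show "\<exists>d>0. \<forall>t\<in>UNIV. dist t t0 < d \<longrightarrow> dist (U t) (U t0) < \<epsilon>"
    proof (intro exI[of _ "min d' 1"] conjI ballI impI)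
      show "min d' 1 > 0" using d' by simp
      fix t assume "dist t t0 < min d' 1"
      then have tt: "\<bar>t - t0\<bar> < d'" "\<bar>t - t0\<bar> < 1" by (auto simp: dist_real_def)
      have pt: "\<bar>(u t y - u t0 y) * \<beta> y\<bar> \<le> \<epsilon> / (Bi + 1) * \<beta> y" for y
      proof (cases "y \<in> {x0-2*h..x0+2*h}")
        case True
        have "(t0, y) \<in> Kc" "(t, y) \<in> Kc" using True tt by (auto simp: Kc_def)
        moreover have "dist (t, y) (t0, y) < d'" using tt by (simp add: dist_Pair_Pair dist_real_def)
        ultimately have "\<bar>u t y - u t0 y\<bar> < \<epsilon> / (Bi + 1)" using d'(2) by (force simp: dist_real_def)
        then have "\<bar>u t y - u t0 y\<bar> * \<beta> y \<le> \<epsilon> / (Bi + 1) * \<beta> y" using \<beta>b[of y] by (intro mult_right_mono) auto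
        then show ?thesis using \<beta>b[of y] by (simp add: abs_mult)
      next
        case False then show ?thesis using \<beta>z[OF False] by simp
      qed
      have "U t - U t0 = (\<integral>y. (u t y - u t0 y) * \<beta> y \<partial>lborel)"
        unfolding U_def using iu[of t] iu[of t0] by (simp add: algebra_simps)
      also have "\<bar>\<dots>\<bar> \<le> (\<integral>y. \<epsilon> / (Bi + 1) * \<beta> y \<partial>lborel)"
        by (rule integral_abs_bound_integral[OF _ _ pt]) (use iu[of t] iu[of t0] \<beta>i in \<open>auto simp: algebra_simps\<close>)
      also have "\<dots> = \<epsilon> / (Bi + 1) * Bi" unfolding Bi_def using \<beta>i by simp
      also have "\<dots> < \<epsilon>" using \<open>\<epsilon> > 0\<close> Bi hp by (simp add: field_simps)
      finally show "dist (U t) (U t0) < \<epsilon>" by (simp add: dist_real_def)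
    qed
  qed
  have Wmeas: "W \<in> borel_measurable borel"
  proof -
    have eqs: "sets (borel \<Otimes>\<^sub>M lborel) = sets (borel :: (real \<times> real) measure)"
      by (metis borel_prod sets_lborel sets_pair_measure_cong)
    have mc: "measurable (borel \<Otimes>\<^sub>M lborel) (borel :: real measure) = measurable (borel :: (real \<times> real) measure) (borel :: real measure)"
      by (rule measurable_cong_sets[OF eqs refl])
    have [measurable]: "(\<lambda>(t, x). R t x) \<in> borel_measurable (borel \<Otimes>\<^sub>M lborel)"
      "(\<lambda>(t, x). S t x) \<in> borel_measurable (borel \<Otimes>\<^sub>M lborel)" using Rm Sm mc by auto
    have [measurable]: "\<beta> \<in> borel_measurable borel" by (rule \<beta>m)
    have eqf: "(\<lambda>(t, y). w t y * \<beta> y) = (\<lambda>p. ((\<lambda>(t, x). R t x) p + (\<lambda>(t, x). S t x) p) / 2 * \<beta> (snd p))"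
      by (auto simp: w_def)
    have "(\<lambda>(t, y). w t y * \<beta> y) \<in> borel_measurable (borel \<Otimes>\<^sub>M lborel)"
      unfolding eqf by measurable
    then show ?thesis unfolding W_def[abs_def]
      by (rule lborel.borel_measurable_lebesgue_integral)
  qed
  have wk: "\<forall>\<alpha> \<alpha>'. (\<forall>s. (\<alpha> has_real_derivative \<alpha>' s) (at s)) \<and> continuous_on UNIV \<alpha>' \<and>
        (\<exists>K. \<forall>s. K < \<bar>s\<bar> \<longrightarrow> \<alpha> s = 0) \<longrightarrow> (\<integral>s. \<alpha>' s * U s + \<alpha> s * W s \<partial>lborel) = 0"
  proof (intro allI impI, elim conjE exE)
    fix \<alpha> \<alpha>' :: "real \<Rightarrow> real" and K
    assume ad: "\<forall>s. (\<alpha> has_real_derivative \<alpha>' s) (at s)" and a'c: "continuous_on UNIV \<alpha>'"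
      and aK: "\<forall>s. K < \<bar>s\<bar> \<longrightarrow> \<alpha> s = 0"
    have ac: "continuous_on UNIV \<alpha>"
      using ad by (intro continuous_at_imp_continuous_on) (auto intro: DERIV_isCont)
    have dc: "continuous_on UNIV (betd x0 h)" by (rule betd_cont[OF hp])
    have tf: "test_fun (\<lambda>t y. \<alpha> t * \<beta> y) (\<lambda>t y. \<alpha>' t * \<beta> y) (\<lambda>t y. \<alpha> t * betd x0 h y)"
      unfolding test_fun_def
    proof (intro conjI allI)
      show "continuous_on UNIV (\<lambda>(t, x). \<alpha>' t * \<beta> x)"
        unfolding case_prod_beta
        by (intro continuous_on_mult continuous_on_compose2[OF a'c] continuous_on_compose2[OF \<beta>c] continuous_intros) auto
      show "continuous_on UNIV (\<lambda>(t, x). \<alpha> t * betd x0 h x)"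
        unfolding case_prod_beta
        by (intro continuous_on_mult continuous_on_compose2[OF ac] continuous_on_compose2[OF dc] continuous_intros) auto
      fix t x
      show "((\<lambda>s. \<alpha> s * \<beta> x) has_real_derivative \<alpha>' t * \<beta> x) (at t)"
        using ad by (intro DERIV_cmult_right) auto
      show "((\<lambda>y. \<alpha> t * \<beta> y) has_real_derivative \<alpha> t * betd x0 h x) (at x)"
        unfolding \<beta>_def by (intro DERIV_cmult bet_deriv[OF hp])
    next
      show "\<exists>K. \<forall>t x. K < \<bar>t\<bar> \<or> K < \<bar>x\<bar> \<longrightarrow> \<alpha> t * \<beta> x = 0"
      proof (intro exI[of _ "max K (\<bar>x0\<bar> + 2*h)"] allI impI)
        fix t x assume "max K (\<bar>x0\<bar> + 2 * h) < \<bar>t\<bar> \<or> max K (\<bar>x0\<bar> + 2 * h) < \<bar>x\<bar>"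
        then show "\<alpha> t * \<beta> x = 0"
        proof
          assume "max K (\<bar>x0\<bar> + 2 * h) < \<bar>t\<bar>" then show ?thesis using aK by simp
        next
          assume "max K (\<bar>x0\<bar> + 2 * h) < \<bar>x\<bar>"
          then have "x \<notin> {x0-2*h..x0+2*h}" by auto
          then show ?thesis using \<beta>z by simp
        qed
      qed
    qed
    have "dint (\<lambda>t x. u t x * (\<alpha>' t * \<beta> x) + (R t x + S t x) / 2 * (\<alpha> t * \<beta> x)) = 0"
      using weak[OF tf] by simp
    moreover have "(\<integral>x. u t x * (\<alpha>' t * \<beta> x) + (R t x + S t x) / 2 * (\<alpha> t * \<beta> x) \<partial>lborel)
        = \<alpha>' t * U t + \<alpha> t * W t" for t
    proof -
      have "(\<integral>x. u t x * (\<alpha>' t * \<beta> x) + (R t x + S t x) / 2 * (\<alpha> t * \<beta> x) \<partial>lborel)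
          = (\<integral>x. \<alpha>' t * (u t x * \<beta> x) + \<alpha> t * (w t x * \<beta> x) \<partial>lborel)"
        by (simp add: w_def algebra_simps)
      also have "\<dots> = \<alpha>' t * U t + \<alpha> t * W t"
        unfolding U_def W_def using iu[of t] iw[of t] by simp
      finally show ?thesis .
    qed
    ultimately show "(\<integral>s. \<alpha>' s * U s + \<alpha> s * W s \<partial>lborel) = 0"
      unfolding dint_def by simp
  qed
  have UL: "\<bar>U b - U a\<bar> \<le> M * (b - a)"
    by (rule weak_lip[OF Uc Wmeas Wb wk]) (use ab in simp)
  have Ux: "\<bar>U t - u t x0 * Bi\<bar> \<le> K1 * sqrt (2*h) * Bi" for t
  proof -
    have pt: "\<bar>(u t y - u t x0) * \<beta> y\<bar> \<le> K1 * sqrt (2*h) * \<beta> y" for y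
    proof (cases "y \<in> {x0-2*h..x0+2*h}")
      case True
      then have "\<bar>y - x0\<bar> \<le> 2*h" by auto
      then have "sqrt \<bar>y - x0\<bar> \<le> sqrt (2*h)" by simp
      then have "\<bar>u t y - u t x0\<bar> \<le> K1 * sqrt (2*h)" using sp[of t y x0] K1
        by (meson mult_left_mono order_trans)
      then show ?thesis using \<beta>b[of y] by (simp add: abs_mult mult_right_mono)
    next
      case False then show ?thesis using \<beta>z[OF False] by simp
    qed
    have "U t - u t x0 * Bi = (\<integral>y. (u t y - u t x0) * \<beta> y \<partial>lborel)"
      unfolding U_def Bi_def using iu[of t] \<beta>i by (simp add: algebra_simps)
    also have "\<bar>\<dots>\<bar> \<le> (\<integral>y. K1 * sqrt (2*h) * \<beta> y \<partial>lborel)"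
      by (rule integral_abs_bound_integral[OF _ _ pt]) (use iu[of t] \<beta>i in \<open>auto simp: algebra_simps\<close>)
    also have "\<dots> = K1 * sqrt (2*h) * Bi" unfolding Bi_def using \<beta>i by simp
    finally show ?thesis .
  qed
  have "\<bar>u b x0 - u a x0\<bar> * Bi = \<bar>u b x0 * Bi - u a x0 * Bi\<bar>"
    using Bi hp by (simp add: abs_mult left_diff_distrib[symmetric])
  also have "\<dots> \<le> 2 * K1 * sqrt (2*h) * Bi + M * h"
    using Ux[of a] Ux[of b] UL unfolding h_def by arith
  also have "\<dots> \<le> 2 * K1 * sqrt (2*h) * Bi + M * Bi" using M0 Bi by (simp add: mult_left_mono)
  finally have "\<bar>u b x0 - u a x0\<bar> * Bi \<le> (2 * K1 * sqrt (2*h) + M) * Bi" by (simp add: algebra_simps)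
  then have X: "\<bar>u b x0 - u a x0\<bar> \<le> 2 * K1 * sqrt (2*h) + M" using Bi hp by simp
  have "sqrt (2*h) = sqrt 2 * sqrt h" by (simp add: real_sqrt_mult)
  moreover have "sqrt 2 \<le> 3/2" by (rule real_le_lsqrt) (auto simp: power2_eq_square)
  ultimately have "2 * K1 * sqrt (2*h) \<le> 3 * K1 * sqrt h"
  proof -
    assume e: "sqrt (2*h) = sqrt 2 * sqrt h" and l: "sqrt 2 \<le> 3/2"
    have "(2 * sqrt 2) * (K1 * sqrt h) \<le> 3 * (K1 * sqrt h)"
      using l K1 sh by (intro mult_right_mono) auto
    then show ?thesis unfolding e by (simp add: algebra_simps)
  qed
  then show ?thesis using X unfolding M_def h_def by (simp add: algebra_simps)
qed

theorem lemma2p2: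
  shows "\<exists>D :: real \<Rightarrow> real \<Rightarrow> real.
    \<forall>(\<kappa>::real) (lam::real) (lamb::real) (c::real \<Rightarrow> real) c' c''
      u0 R0 S0 \<mu>0 \<nu>0 u R S \<mu> \<nu>.
      \<kappa> > 1 \<and> lam \<ge> 0 \<and> lamb \<ge> 0 \<and>
      (\<forall>x. (c has_real_derivative c' x) (at x)) \<and>
      (\<forall>x. (c' has_real_derivative c'' x) (at x)) \<and> continuous_on UNIV c'' \<and>
      (\<forall>x. 1 / \<kappa> \<le> c x \<and> c x \<le> \<kappa> \<and> \<bar>c' x\<bar> \<le> lam \<and> \<bar>c'' x\<bar> \<le> lamb) \<and>
      admissible c u0 R0 S0 \<mu>0 \<nu>0 \<and>
      conservative_solution c c' u R S \<mu> \<nu> u0 R0 S0 \<mu>0 \<nu>0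
      \<longrightarrow> (\<forall>t1 x1 t2 x2.
             \<bar>u t1 x1 - u t2 x2\<bar>
               \<le> D \<kappa> (measure \<mu>0 UNIV + measure \<nu>0 UNIV) * sqrt (\<bar>t2 - t1\<bar> + \<bar>x2 - x1\<bar>))"
proof (intro exI[of _ "\<lambda>\<kappa> E. \<kappa> * (8*E+1) + E + 2"] allI impI)
  fix \<kappa> lam lamb :: real and c c' c'' :: "real \<Rightarrow> real" and u0 R0 S0 :: "real \<Rightarrow> real"
    and \<mu>0 \<nu>0 :: "real measure" and u R S :: "real \<Rightarrow> real \<Rightarrow> real" and \<mu> \<nu> :: "real \<Rightarrow> real measure"
    and t1 x1 t2 x2 :: real
  assume H: "\<kappa> > 1 \<and> lam \<ge> 0 \<and> lamb \<ge> 0 \<and>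
      (\<forall>x. (c has_real_derivative c' x) (at x)) \<and>
      (\<forall>x. (c' has_real_derivative c'' x) (at x)) \<and> continuous_on UNIV c'' \<and>
      (\<forall>x. 1 / \<kappa> \<le> c x \<and> c x \<le> \<kappa> \<and> \<bar>c' x\<bar> \<le> lam \<and> \<bar>c'' x\<bar> \<le> lamb) \<and>
      admissible c u0 R0 S0 \<mu>0 \<nu>0 \<and>
      conservative_solution c c' u R S \<mu> \<nu> u0 R0 S0 \<mu>0 \<nu>0"
  define E where "E = measure \<mu>0 UNIV + measure \<nu>0 UNIV"
  have kp: "\<kappa> > 0" using H by simp
  have cpos: "\<forall>x. 1/\<kappa> \<le> c x" using H by simp
  have cs: "conservative_solution c c' u R S \<mu> \<nu> u0 R0 S0 \<mu>0 \<nu>0" using H by simp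
  have adm: "\<And>t. admissible c (u t) (R t) (S t) (\<mu> t) (\<nu> t)"
    and en: "\<And>t. measure (\<mu> t) UNIV + measure (\<nu> t) UNIV = E"
    and cu: "continuous_on UNIV (\<lambda>(t, x). u t x)"
    and Rm: "(\<lambda>(t, x). R t x) \<in> borel_measurable borel"
    and Sm: "(\<lambda>(t, x). S t x) \<in> borel_measurable borel"
    and weak: "\<And>\<phi> \<phi>t \<phi>x. test_fun \<phi> \<phi>t \<phi>x \<Longrightarrow>
        dint (\<lambda>t x. u t x * \<phi>t t x + (R t x + S t x) / 2 * \<phi> t x) = 0"
    using cs unfolding conservative_solution_def E_def by blast+
  have E0: "E \<ge> 0" unfolding E_def by (simp add: add_nonneg_nonneg)
  define K1 where "K1 = \<kappa> * (8*E+1) / 4"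
  have K1: "K1 \<ge> 0" using kp E0 by (simp add: K1_def)
  have enl: "measure (\<mu> t) UNIV + measure (\<nu> t) UNIV \<le> E" for t using en[of t] by simp
  have sp: "\<bar>u t y - u t z\<bar> \<le> K1 * sqrt \<bar>y - z\<bar>" for t y z
  proof (cases "z \<le> y")
    case True
    then show ?thesis using spatial[OF adm[of t] cpos kp enl True] by (simp add: K1_def)
  next
    case False
    then have yz: "y \<le> z" by simp
    then show ?thesis using spatial[OF adm[of t] cpos kp enl yz] by (simp add: K1_def abs_minus_commute)
  qed
  have T: "\<bar>u bb x - u aa x\<bar> \<le> (3*K1 + E + 2) * sqrt (bb - aa)" if "aa < bb" for aa bb x
    by (rule temporal[OF adm en cu Rm Sm weak sp K1 E0 that])
  have tp: "\<bar>u sb x - u sa x\<bar> \<le> (3*K1 + E + 2) * sqrt \<bar>sb - sa\<bar>" for sa sb x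
  proof -
    consider "sa < sb" | "sa = sb" | "sb < sa" by linarith
    then show ?thesis
    proof cases
      case 1 then show ?thesis using T[OF 1, of x] by simp
    next
      case 2 then show ?thesis by simp
    next
      case 3 then show ?thesis using T[OF 3, of x] by (simp add: abs_minus_commute)
    qed
  qed
  have "\<bar>u t1 x1 - u t2 x2\<bar> \<le> \<bar>u t1 x1 - u t1 x2\<bar> + \<bar>u t2 x2 - u t1 x2\<bar>" by arith
  also have "\<dots> \<le> K1 * sqrt \<bar>x1 - x2\<bar> + (3*K1 + E + 2) * sqrt \<bar>t2 - t1\<bar>"
    using sp[where t=t1 and y=x1 and z=x2] tp[where sa=t1 and sb=t2 and x=x2] by simp
  also have "\<dots> \<le> K1 * sqrt (\<bar>t2 - t1\<bar> + \<bar>x2 - x1\<bar>) + (3*K1 + E + 2) * sqrt (\<bar>t2 - t1\<bar> + \<bar>x2 - x1\<bar>)"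
    using K1 E0 by (intro add_mono mult_left_mono) (auto simp: abs_minus_commute)
  also have "\<dots> = (\<kappa> * (8*E+1) + E + 2) * sqrt (\<bar>t2 - t1\<bar> + \<bar>x2 - x1\<bar>)"
    by (simp add: K1_def field_simps)
  finally show "\<bar>u t1 x1 - u t2 x2\<bar> \<le> (\<lambda>\<kappa> E. \<kappa> * (8*E+1) + E + 2) \<kappa> (measure \<mu>0 UNIV + measure \<nu>0 UNIV) * sqrt (\<bar>t2 - t1\<bar> + \<bar>x2 - x1\<bar>)"
    unfolding E_def by simp
qed

end
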